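(* Let $z_\delta^{(n)}=h(v_\delta^{(n)})$. There exists a constant $C_{15}>0$ independent of $n\in\mathbb{N}$ and $\delta>0$ such that $$\int_0^1|v_\delta^{(n)}(t)|^2dx\le C_{15},\quad \int_0^1|z_\delta^{(n)}(t)|^2dx\le C_{15}\quad(0\le t\le T),$$ $$\int_0^T\!\!\int_0^1|\widetilde v_\delta^{(n)}|^2dxdt\le C_{15},\quad \int_0^T\!\!\int_0^1|\widetilde z_\delta^{(n)}|^2dxdt\le C_{15},$$ where for $w\in\{v,z\}$, $\widetilde w_\delta^{(n)}(t,x)=0$ for $0\le x<\Delta x^{(n)}$ and $\widetilde w_\delta^{(n)}(t,x)=\big(w_\delta^{(n)}(t,x)-w_\delta^{(n)}(t,x-\Delta x^{(n)})\big)/\Delta x^{(n)}$ for $\Delta x^{(n)}\le x\le1$.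
   Context: $Q(T)=(0,T)\times(0,1)$, $H=L^2(0,1)$, $X=H^1(0,1)$, $T>0$. Assume $h\in C^2(\mathbb{R})$ with $\delta_h\le h'\le C_h$, $|h''|\le C_h$; $b\in C^2(\mathbb{R})$ with $\delta_b\le b\le C_b$, $|b'|,|b''|\le C_b$ (positive constants); $p\in L^2(0,T;H)$; $v_0\in H$. Extend $p$ by zero to $\mathbb{R}^2$ and let $\rho_\delta=J^{(2)}_\delta\ast p$ ($J^{(2)}_\delta$ a standard mollifier on $\mathbb{R}^2$). For $n\in\mathbb{N}$ let $\Delta x^{(n)}=1/n$, $\chi_i^{(n)}$ the characteristic function of $[(i-1)\Delta x^{(n)},i\Delta x^{(n)})$, $\rho_{\delta,i}^{(n)}(t)=\frac1{\Delta x^{(n)}}\int_{(i-1)\Delta x^{(n)}}^{i\Delta x^{(n)}}\rho_\delta(t,\xi)d\xi$, $v_{0,i}^{(n)}=\frac1{\Delta x^{(n)}}\int_{(i-1)\Delta x^{(n)}}^{i\Delta x^{(n)}}v_0(\xi)d\xi$. Let $(v_{\delta,1}^{(n)},\dots,v_{\delta,n}^{(n)})$ be the unique $C^1$ solution of (writing $v_i=v_{\delta,i}^{(n)}$, $\rho_i=\rho_{\delta,i}^{(n)}$, $\Delta x=\Delta x^{(n)}$, $a_i=\frac{v_{i+1}-v_i}{\Delta x}+b(\frac{v_i+v_{i+1}}2)\rho_i$, $i=1,\dots,n-1$): $h'(v_1)v_1'=a_1/\Delta x$; $h'(v_i)v_i'=(a_i-a_{i-1})/\Delta x$ for $2\le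 i\le n-1$; $h'(v_n)v_n'=-a_{n-1}/\Delta x$; $v_i(0)=v_{0,i}^{(n)}$. Set $v_\delta^{(n)}(t,x)=\sum_{i=1}^n\chi_i^{(n)}(x)v_{\delta,i}^{(n)}(t)$ on $Q(T)$. *)

theory Defs
  imports "HOL-Analysis.Analysis"
begin

definition QT :: "real \<Rightarrow> (real \<times> real) set" where
  "QT T = {0<..<T} \<times> {0<..<1}"

definition bump2 :: "real \<times> real \<Rightarrow> real" where
  "bump2 z = (if norm z < 1 then exp (1 / ((norm z)\<^sup>2 - 1)) else 0)"

definition std_moll :: "real \<times> real \<Rightarrow> real" where
  "std_moll z = bump2 z / (\<integral> w. bump2 w \<partial>lborel)"

definition moll :: "real \<Rightarrow> real \<times> real \<Rightarrow> real" where
  "moll \<delta> z = std_moll ((1 / \<delta>) *\<^sub>R z) / \<delta>\<^sup>2"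

definition rho :: "(real \<times> real \<Rightarrow> real) \<Rightarrow> real \<Rightarrow> real \<Rightarrow> real \<times> real \<Rightarrow> real" where
  "rho p T \<delta> z = (\<integral> y. moll \<delta> (z - y) * (indicator (QT T) y * p y) \<partial>lborel)"

definition dx :: "nat \<Rightarrow> real" where
  "dx n = 1 / real n"

definition cell :: "nat \<Rightarrow> nat \<Rightarrow> real set" where
  "cell n i = {real (i - 1) * dx n ..< real i * dx n}"

definition rho_i :: "(real \<times> real \<Rightarrow> real) \<Rightarrow> real \<Rightarrow> real \<Rightarrow> nat \<Rightarrow> nat \<Rightarrow> real \<Rightarrow> real" where
  "rho_i p T \<delta> n i t = (1 / dx n) * set_lebesgue_integral lborel (cell n i) (\<lambda>\<xi>. rho p T \<delta> (t, \<xi>))"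

definition v0_i :: "(real \<Rightarrow> real) \<Rightarrow> nat \<Rightarrow> nat \<Rightarrow> real" where
  "v0_i v0 n i = (1 / dx n) * set_lebesgue_integral lborel (cell n i) v0"

definition flux :: "(real \<Rightarrow> real) \<Rightarrow> (real \<times> real \<Rightarrow> real) \<Rightarrow> real \<Rightarrow> real \<Rightarrow> nat
    \<Rightarrow> (nat \<Rightarrow> real \<Rightarrow> real) \<Rightarrow> nat \<Rightarrow> real \<Rightarrow> real" where
  "flux b p T \<delta> n v i t =
     (v (Suc i) t - v i t) / dx n + b ((v i t + v (Suc i) t) / 2) * rho_i p T \<delta> n i t"

definition scheme_sol :: "(real \<Rightarrow> real) \<Rightarrow> (real \<Rightarrow> real) \<Rightarrow> (real \<times> real \<Rightarrow> real)
    \<Rightarrow> (real \<Rightarrow> real) \<Rightarrow> real \<Rightarrow> real \<Rightarrow> nat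
    \<Rightarrow> (nat \<Rightarrow> real \<Rightarrow> real) \<Rightarrow> (nat \<Rightarrow> real \<Rightarrow> real) \<Rightarrow> bool" where
  "scheme_sol h' b p v0 T \<delta> n v v' \<longleftrightarrow>
     (\<forall>i\<in>{1..n}.
        (\<forall>t\<in>{0..T}. (v i has_real_derivative v' i t) (at t within {0..T})) \<and>
        continuous_on {0..T} (v' i) \<and>
        v i 0 = v0_i v0 n i) \<and>
     (\<forall>t\<in>{0..T}.
        h' (v 1 t) * v' 1 t = flux b p T \<delta> n v 1 t / dx n \<and>
        (\<forall>i. 2 \<le> i \<and> i \<le> n - 1 \<longrightarrow>
           h' (v i t) * v' i t = (flux b p T \<delta> n v i t - flux b p T \<delta> n v (i - 1) t) / dx n) \<and>
        h' (v n t) * v' n t = - flux b p T \<delta> n v (n - 1) t / dx n)"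

definition step_fun :: "nat \<Rightarrow> (nat \<Rightarrow> real \<Rightarrow> real) \<Rightarrow> real \<Rightarrow> real \<Rightarrow> real" where
  "step_fun n w t x = (\<Sum>i\<in>{1..n}. indicator (cell n i) x * w i t)"

definition diffq :: "nat \<Rightarrow> (real \<Rightarrow> real \<Rightarrow> real) \<Rightarrow> real \<Rightarrow> real \<Rightarrow> real" where
  "diffq n W t x = (if x < dx n then 0 else (W t x - W t (x - dx n)) / dx n)"

end

theory Submission
  imports Defs
begin


lemma cs_ineq:
  fixes f g :: "'a \<Rightarrow> real"
  assumes fm[measurable]: "f \<in> borel_measurable M" and gm[measurable]: "g \<in> borel_measurable M"
    and f0: "\<And>x. 0 \<le> f x" and f1: "(\<integral>\<^sup>+x. f x \<partial>M) \<le> 1"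
  shows "ennreal ((\<integral>x. f x * g x \<partial>M)\<^sup>2) \<le> (\<integral>\<^sup>+x. f x * (g x)\<^sup>2 \<partial>M)"
proof (cases "integrable M (\<lambda>x. f x * g x) \<and> (\<integral>\<^sup>+x. f x * (g x)\<^sup>2 \<partial>M) < \<infinity>")
  case False
  show ?thesis
  proof (cases "integrable M (\<lambda>x. f x * g x)")
    case False
    then show ?thesis by (simp add: not_integrable_integral_eq)
  next
    case True
    with False have "(\<integral>\<^sup>+x. f x * (g x)\<^sup>2 \<partial>M) = \<infinity>" using less_top by auto
    then show ?thesis by simp
  qed
next
  case True
  then have i1: "integrable M (\<lambda>x. f x * g x)" and fin: "(\<integral>\<^sup>+x. f x * (g x)\<^sup>2 \<partial>M) < \<infinity>" by auto
  have i2: "integrable M (\<lambda>x. f x * (g x)\<^sup>2)"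
    using fin f0 by (intro integrableI_nn_integral_finite[where x="enn2real (\<integral>\<^sup>+x. f x * (g x)\<^sup>2 \<partial>M)"]) auto
  have i3: "integrable M f"
    using f1 f0 by (intro integrableI_nn_integral_finite[where x="enn2real (\<integral>\<^sup>+x. f x \<partial>M)"])
      (auto simp: top_unique less_top[symmetric] ennreal_enn2real_if intro: le_less_trans[OF f1])
  define m where "m = (\<integral>x. f x * g x \<partial>M)"
  define a where "a = (\<integral>x. f x \<partial>M)"
  have a0: "0 \<le> a" unfolding a_def using f0 by simp
  have a1: "a \<le> 1"
  proof -
    have "ennreal a = (\<integral>\<^sup>+x. f x \<partial>M)" unfolding a_def using i3 f0 by (simp add: nn_integral_eq_integral)
    then show ?thesis using f1 by (metis ennreal_le_1)
  qed
  have "0 \<le> (\<integral>x. f x * (g x - m)\<^sup>2 \<partial>M)" using f0 by simp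
  also have "(\<integral>x. f x * (g x - m)\<^sup>2 \<partial>M) = (\<integral>x. f x * (g x)\<^sup>2 - 2 * m * (f x * g x) + m\<^sup>2 * f x \<partial>M)"
    by (rule Bochner_Integration.integral_cong) (auto simp: power2_eq_square algebra_simps)
  also have "\<dots> = (\<integral>x. f x * (g x)\<^sup>2 \<partial>M) - 2 * m * m + m\<^sup>2 * a"
    using i1 i2 i3 unfolding m_def a_def by simp
  finally have "m\<^sup>2 * (2 - a) \<le> (\<integral>x. f x * (g x)\<^sup>2 \<partial>M)" by (simp add: power2_eq_square algebra_simps)
  moreover have "m\<^sup>2 \<le> m\<^sup>2 * (2 - a)" using a1 by (simp add: mult_le_cancel_left1)
  ultimately have "m\<^sup>2 \<le> (\<integral>x. f x * (g x)\<^sup>2 \<partial>M)" by linarith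
  then have "ennreal (m\<^sup>2) \<le> ennreal (\<integral>x. f x * (g x)\<^sup>2 \<partial>M)" by (rule ennreal_leI)
  also have "\<dots> = (\<integral>\<^sup>+x. f x * (g x)\<^sup>2 \<partial>M)" using i2 f0 by (simp add: nn_integral_eq_integral)
  finally show ?thesis unfolding m_def .
qed



lemma nn_affine2:
  fixes F :: "real \<times> real \<Rightarrow> ennreal"
  assumes [measurable]: "F \<in> borel_measurable borel" and c: "c \<noteq> 0"
  shows "(\<integral>\<^sup>+y. F y \<partial>lborel) = ennreal (\<bar>c\<bar>^2) * (\<integral>\<^sup>+x. F (t + c *\<^sub>R x) \<partial>lborel)"
  by (subst lborel_affine[OF c, of t])
     (simp add: nn_integral_density nn_integral_distr nn_integral_cmult power2_eq_square)

lemma bump2_meas[measurable]: "bump2 \<in> borel_measurable borel"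
  unfolding bump2_def by measurable

lemma bump2_nonneg: "0 \<le> bump2 z"
  unfolding bump2_def by simp

lemma moll_meas[measurable]: "moll \<delta> \<in> borel_measurable borel"
  unfolding moll_def std_moll_def by measurable

lemma moll_nonneg: "0 \<le> moll \<delta> z"
  unfolding moll_def std_moll_def using bump2_nonneg
  by (simp add: integral_nonneg_AE bump2_nonneg)

lemma moll_scaled:
  assumes d: "\<delta> > 0"
  shows "(\<integral>\<^sup>+x. ennreal (moll \<delta> (\<delta> *\<^sub>R x)) \<partial>lborel) * ennreal (\<delta>^2) \<le> 1"
proof -
  define c where "c = (\<integral>w. bump2 w \<partial>lborel)"
  have c0: "0 \<le> c" unfolding c_def by (simp add: integral_nonneg_AE bump2_nonneg)
  have eq: "moll \<delta> (\<delta> *\<^sub>R x) * \<delta>^2 = bump2 x / c" for x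
    using d unfolding moll_def std_moll_def c_def by simp
  show ?thesis
  proof (cases "c = 0")
    case True
    then have "moll \<delta> (\<delta> *\<^sub>R x) = 0" for x using eq[of x] d by simp
    then show ?thesis by simp
  next
    case False
    with c0 have cp: "c > 0" by simp
    then have int: "integrable lborel bump2" unfolding c_def using not_integrable_integral_eq by force
    have "(\<integral>\<^sup>+x. ennreal (moll \<delta> (\<delta> *\<^sub>R x)) \<partial>lborel) * ennreal (\<delta>^2)
        = (\<integral>\<^sup>+x. ennreal (moll \<delta> (\<delta> *\<^sub>R x) * \<delta>^2) \<partial>lborel)"
      by (subst nn_integral_multc[symmetric]) (auto simp: ennreal_mult moll_nonneg)
    also have "\<dots> = (\<integral>\<^sup>+x. ennreal (bump2 x) * ennreal (1 / c) \<partial>lborel)"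
      using cp by (simp add: eq ennreal_mult[symmetric] bump2_nonneg)
    also have "\<dots> = (\<integral>\<^sup>+x. ennreal (bump2 x) \<partial>lborel) * ennreal (1/c)"
      by (simp add: nn_integral_multc)
    also have "(\<integral>\<^sup>+x. ennreal (bump2 x) \<partial>lborel) = ennreal c"
      unfolding c_def using int by (simp add: nn_integral_eq_integral bump2_nonneg)
    also have "ennreal c * ennreal (1/c) = 1" using cp by (simp add: ennreal_mult[symmetric])
    finally show ?thesis by simp
  qed
qed

lemma moll_int1:
  assumes d: "\<delta> > 0"
  shows "(\<integral>\<^sup>+y. ennreal (moll \<delta> (z - y)) \<partial>lborel) \<le> 1"
proof -
  have "(\<integral>\<^sup>+y. ennreal (moll \<delta> (z - y)) \<partial>lborel)
      = ennreal (\<bar>-\<delta>\<bar>^2) * (\<integral>\<^sup>+x. ennreal (moll \<delta> (z - (z + (-\<delta>) *\<^sub>R x))) \<partial>lborel)"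
    using d by (intro nn_affine2) auto
  also have "\<dots> = (\<integral>\<^sup>+x. ennreal (moll \<delta> (\<delta> *\<^sub>R x)) \<partial>lborel) * ennreal (\<delta>^2)"
    by (simp add: mult.commute)
  finally show ?thesis using moll_scaled[OF d] by simp
qed

lemma moll_int2:
  assumes d: "\<delta> > 0"
  shows "(\<integral>\<^sup>+z. ennreal (moll \<delta> (z - y)) \<partial>lborel) \<le> 1"
proof -
  have "(\<integral>\<^sup>+z. ennreal (moll \<delta> (z - y)) \<partial>lborel)
      = ennreal (\<bar>\<delta>\<bar>^2) * (\<integral>\<^sup>+x. ennreal (moll \<delta> ((y + \<delta> *\<^sub>R x) - y)) \<partial>lborel)"
    using d by (intro nn_affine2) auto
  also have "\<dots> = (\<integral>\<^sup>+x. ennreal (moll \<delta> (\<delta> *\<^sub>R x)) \<partial>lborel) * ennreal (\<delta>^2)"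
    by (simp add: mult.commute)
  finally show ?thesis using moll_scaled[OF d] by simp
qed



lemma QT_sets[measurable]: "QT T \<in> sets borel"
  unfolding QT_def by (intro borel_open open_Times) auto

lemma rho_eq: "rho p T \<delta> z = (\<integral>y. moll \<delta> (z - y) * (indicator (QT T) y * p y) \<partial>lborel)"
  unfolding rho_def ..

lemma rho_meas:
  assumes pm[measurable]: "p \<in> borel_measurable lborel"
  shows "rho p T \<delta> \<in> borel_measurable lborel"
proof -
  have pm'[measurable]: "p \<in> borel_measurable borel" using pm by simp
  have "(\<lambda>z. \<integral>y. moll \<delta> (z - y) * (indicator (QT T) y * p y) \<partial>lborel) \<in> borel_measurable lborel"
    by (rule lborel.borel_measurable_lebesgue_integral) measurable
  then show ?thesis unfolding rho_def[abs_def] .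
qed

lemma rho_sq:
  assumes pm[measurable]: "p \<in> borel_measurable lborel" and d: "\<delta> > 0"
  shows "ennreal ((rho p T \<delta> z)\<^sup>2) \<le> (\<integral>\<^sup>+y. moll \<delta> (z - y) * (indicator (QT T) y * p y)\<^sup>2 \<partial>lborel)"
  unfolding rho_def
  by (rule cs_ineq) (use moll_nonneg moll_int1[OF d] in auto)

lemma rho_L2:
  assumes pm[measurable]: "p \<in> borel_measurable lborel" and d: "\<delta> > 0"
    and pL2: "set_integrable lborel (QT T) (\<lambda>z. (p z)\<^sup>2)"
  shows "(\<integral>\<^sup>+z. ennreal ((rho p T \<delta> z)\<^sup>2) \<partial>lborel) \<le> ennreal (set_lebesgue_integral lborel (QT T) (\<lambda>z. (p z)\<^sup>2))"
proof -
  have pm'[measurable]: "p \<in> borel_measurable borel" using pm by simp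
  define q where "q y = indicator (QT T) y * p y" for y
  have qm[measurable]: "q \<in> borel_measurable borel" unfolding q_def by measurable
  have "(\<integral>\<^sup>+z. ennreal ((rho p T \<delta> z)\<^sup>2) \<partial>lborel) \<le> (\<integral>\<^sup>+z. \<integral>\<^sup>+y. ennreal (moll \<delta> (z - y) * (q y)\<^sup>2) \<partial>lborel \<partial>lborel)"
    by (rule nn_integral_mono) (use rho_sq[OF pm d] in \<open>simp add: q_def\<close>)
  also have "\<dots> = (\<integral>\<^sup>+y. \<integral>\<^sup>+z. ennreal (moll \<delta> (z - y) * (q y)\<^sup>2) \<partial>lborel \<partial>lborel)"
    by (rule lborel_pair.Fubini'[symmetric]) measurable
  also have "\<dots> = (\<integral>\<^sup>+y. (\<integral>\<^sup>+z. ennreal (moll \<delta> (z - y)) \<partial>lborel) * ennreal ((q y)\<^sup>2) \<partial>lborel)"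
    by (rule nn_integral_cong) (simp add: ennreal_mult moll_nonneg nn_integral_multc)
  also have "\<dots> \<le> (\<integral>\<^sup>+y. ennreal ((q y)\<^sup>2) \<partial>lborel)"
    proof (rule nn_integral_mono)
    fix y
    show "(\<integral>\<^sup>+z. ennreal (moll \<delta> (z - y)) \<partial>lborel) * ennreal ((q y)\<^sup>2) \<le> ennreal ((q y)\<^sup>2)"
      using mult_right_mono[OF moll_int2[OF d, of y], of "ennreal ((q y)\<^sup>2)"] by simp
  qed
  also have "\<dots> = (\<integral>\<^sup>+y. ennreal (indicator (QT T) y *\<^sub>R (p y)\<^sup>2) \<partial>lborel)"
    by (rule nn_integral_cong) (simp add: q_def indicator_def power2_eq_square)
  also have "\<dots> = ennreal (set_lebesgue_integral lborel (QT T) (\<lambda>z. (p z)\<^sup>2))"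
    using pL2 unfolding set_integrable_def set_lebesgue_integral_def
    by (intro nn_integral_eq_integral) auto
  finally show ?thesis .
qed

lemma rho_slices:
  assumes pm[measurable]: "p \<in> borel_measurable lborel" and d: "\<delta> > 0"
    and pL2: "set_integrable lborel (QT T) (\<lambda>z. (p z)\<^sup>2)"
  shows "(\<integral>\<^sup>+t. \<integral>\<^sup>+\<xi>. ennreal ((rho p T \<delta> (t, \<xi>))\<^sup>2) \<partial>lborel \<partial>lborel) \<le> ennreal (set_lebesgue_integral lborel (QT T) (\<lambda>z. (p z)\<^sup>2))"
proof -
  have rm[measurable]: "rho p T \<delta> \<in> borel_measurable borel" using rho_meas[OF pm] by simp
  have "(\<integral>\<^sup>+t. \<integral>\<^sup>+\<xi>. ennreal ((rho p T \<delta> (t, \<xi>))\<^sup>2) \<partial>lborel \<partial>lborel)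
     = (\<integral>\<^sup>+z. ennreal ((rho p T \<delta> z)\<^sup>2) \<partial>(lborel \<Otimes>\<^sub>M lborel))"
    by (rule lborel.nn_integral_fst[where f="\<lambda>z. ennreal ((rho p T \<delta> z)\<^sup>2)"]) (simp add: lborel_prod)
  also have "\<dots> = (\<integral>\<^sup>+z. ennreal ((rho p T \<delta> z)\<^sup>2) \<partial>lborel)" by (simp add: lborel_prod)
  finally show ?thesis using rho_L2[OF pm d pL2] by simp
qed



lemma cell_sets[measurable]: "cell n i \<in> sets borel"
  unfolding cell_def by simp

lemma cell_mem:
  assumes "n \<ge> 1" "i \<ge> 1"
  shows "x \<in> cell n i \<longleftrightarrow> real i - 1 \<le> x * real n \<and> x * real n < real i"
proof -
  have np: "real n > 0" using assms by simp
  have "real (i - 1) = real i - 1" using assms by (simp add: of_nat_diff)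
  then show ?thesis using np unfolding cell_def dx_def
    by (simp add: field_simps)
qed

lemma cell_unique:
  assumes "n \<ge> 1" "i \<ge> 1" "j \<ge> 1" "x \<in> cell n i" "x \<in> cell n j"
  shows "i = j"
proof -
  from assms cell_mem have a: "real i - 1 \<le> x * real n" "x * real n < real i"
    "real j - 1 \<le> x * real n" "x * real n < real j" by auto
  then have "real i < real j + 1" "real j < real i + 1" by linarith+
  then show ?thesis by linarith
qed

lemma cell_exists:
  assumes n: "n \<ge> 1" and x: "0 \<le> x" "x < 1"
  shows "\<exists>i\<in>{1..n}. x \<in> cell n i"
proof -
  define k where "k = nat \<lfloor>x * real n\<rfloor>"
  have np: "real n > 0" using n by simp
  have xn0: "0 \<le> x * real n" using x np by simp
  have xn1: "x * real n < real n" using x np by simp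
  have k1: "real k \<le> x * real n" unfolding k_def using xn0 by linarith
  have k2: "x * real n < real k + 1" unfolding k_def using xn0 by linarith
  have "k < n" using k1 xn1 by linarith
  then have "Suc k \<in> {1..n}" by simp
  moreover have "x \<in> cell n (Suc k)" using cell_mem[OF n, of "Suc k"] k1 k2 by simp
  ultimately show ?thesis by blast
qed

lemma cell_sub: assumes "n \<ge> 1" "i \<in> {1..n}" "x \<in> cell n i" shows "0 \<le> x" "x < 1"
proof -
  have np: "real n > 0" using assms by simp
  from assms cell_mem[of n i x] have "real i - 1 \<le> x * real n" "x * real n < real i" by auto
  moreover have "real i \<le> real n" "real i \<ge> 1" using assms by auto
  ultimately have a: "0 \<le> x * real n" "x * real n < 1 * real n" by linarith+
  from a(1) np show "0 \<le> x" by (simp add: zero_le_mult_iff)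
  from a(2) np show "x < 1" by (simp only: mult_less_cancel_right)
qed

lemma sum_ind_cell:
  assumes n: "n \<ge> 1" and i: "i \<in> {1..n}" and x: "x \<in> cell n i"
  shows "(\<Sum>j\<in>{1..n}. indicator (cell n j) x * c j) = (c i :: real)"
proof -
  have "(\<Sum>j\<in>{1..n}. indicator (cell n j) x * c j) = (\<Sum>j\<in>{1..n}. if j = i then c i else 0)"
    by (rule sum.cong) (use cell_unique[OF n] i x in \<open>auto simp: indicator_def\<close>)
  also have "\<dots> = c i" using i by simp
  finally show ?thesis .
qed

lemma sum_ind_le:
  assumes n: "n \<ge> 1"
  shows "(\<Sum>j\<in>{1..n}. indicator (cell n j) x) \<le> (indicator {0..1} x :: real)"
proof (cases "\<exists>i\<in>{1..n}. x \<in> cell n i")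
  case True
  then obtain i where i: "i \<in> {1..n}" "x \<in> cell n i" by blast
  have "(\<Sum>j\<in>{1..n}. indicator (cell n j) x) = (\<Sum>j\<in>{1..n}. indicator (cell n j) x * (\<lambda>_. 1::real) j)" by simp
  also have "\<dots> = 1" using sum_ind_cell[OF n i] .
  finally show ?thesis using cell_sub[OF n i] by simp
next
  case False
  then have "(\<Sum>j\<in>{1..n}. indicator (cell n j) x) = (0::real)" by (intro sum.neutral) auto
  then show ?thesis by simp
qed

lemma emeasure_cell:
  assumes "n \<ge> 1" "i \<ge> 1"
  shows "emeasure lborel (cell n i) = ennreal (dx n)"
proof -
  have "real (i - 1) = real i - 1" using assms by (simp add: of_nat_diff)
  then have "real i * dx n - real (i - 1) * dx n = dx n" by (simp add: algebra_simps)
  moreover have "real (i - 1) * dx n \<le> real i * dx n" using assms unfolding dx_def by (simp add: divide_right_mono)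
  ultimately show ?thesis unfolding cell_def by simp
qed

lemma cell_avg:
  assumes n: "n \<ge> 1" and i: "i \<ge> 1" and gm[measurable]: "g \<in> borel_measurable borel"
  shows "ennreal (((1 / dx n) * set_lebesgue_integral lborel (cell n i) g)\<^sup>2 * dx n)
     \<le> (\<integral>\<^sup>+x. ennreal (indicator (cell n i) x * (g x)\<^sup>2) \<partial>lborel)"
proof -
  have dp: "dx n > 0" using n unfolding dx_def by simp
  define f where "f x = (1 / dx n) * indicator (cell n i) x" for x
  have fm[measurable]: "f \<in> borel_measurable borel" unfolding f_def by measurable
  have f0: "\<And>x. 0 \<le> f x" unfolding f_def using dp by simp
  have "(\<integral>\<^sup>+x. f x \<partial>lborel) = (\<integral>\<^sup>+x. ennreal (1 / dx n) * indicator (cell n i) x \<partial>lborel)"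
    unfolding f_def using dp by (intro nn_integral_cong) (auto simp: indicator_def)
  also have "\<dots> = ennreal (1 / dx n) * emeasure lborel (cell n i)"
    by (simp add: nn_integral_cmult_indicator)
  also have "\<dots> = 1" using dp by (simp add: emeasure_cell[OF n i] ennreal_mult[symmetric])
  finally have f1: "(\<integral>\<^sup>+x. f x \<partial>lborel) \<le> 1" by simp
  have "(\<integral>x. f x * g x \<partial>lborel) = (1 / dx n) * set_lebesgue_integral lborel (cell n i) g"
    unfolding f_def set_lebesgue_integral_def by (simp add: mult.assoc)
  then have "ennreal (((1 / dx n) * set_lebesgue_integral lborel (cell n i) g)\<^sup>2) \<le> (\<integral>\<^sup>+x. f x * (g x)\<^sup>2 \<partial>lborel)"
    using cs_ineq[of f lborel g, OF _ _ f0 f1] by simp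
  also have "\<dots> = (\<integral>\<^sup>+x. ennreal (1 / dx n) * ennreal (indicator (cell n i) x * (g x)\<^sup>2) \<partial>lborel)"
    unfolding f_def using dp by (intro nn_integral_cong) (simp add: ennreal_mult[symmetric] mult.assoc)
  also have "\<dots> = ennreal (1 / dx n) * (\<integral>\<^sup>+x. ennreal (indicator (cell n i) x * (g x)\<^sup>2) \<partial>lborel)"
    by (rule nn_integral_cmult) measurable
  finally have "ennreal (((1 / dx n) * set_lebesgue_integral lborel (cell n i) g)\<^sup>2) * ennreal (dx n)
     \<le> ennreal (1 / dx n) * (\<integral>\<^sup>+x. ennreal (indicator (cell n i) x * (g x)\<^sup>2) \<partial>lborel) * ennreal (dx n)"
    by (rule mult_right_mono) simp
  also have "\<dots> = (ennreal (dx n) * ennreal (1 / dx n)) * (\<integral>\<^sup>+x. ennreal (indicator (cell n i) x * (g x)\<^sup>2) \<partial>lborel)"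
    by (simp only: mult.commute mult.left_commute mult.assoc)
  also have "ennreal (dx n) * ennreal (1 / dx n) = 1" using dp by (simp add: ennreal_mult[symmetric])
  finally show ?thesis using dp by (simp add: ennreal_mult)
qed

lemma cells_sum_nn:
  assumes n: "n \<ge> 1" and gm[measurable]: "g \<in> borel_measurable borel"
  shows "(\<Sum>i\<in>{1..n}. (\<integral>\<^sup>+x. ennreal (indicator (cell n i) x * (g x)\<^sup>2) \<partial>lborel))
     \<le> (\<integral>\<^sup>+x. ennreal (indicator {0..1} x * (g x)\<^sup>2) \<partial>lborel)"
proof -
  have "(\<Sum>i\<in>{1..n}. (\<integral>\<^sup>+x. ennreal (indicator (cell n i) x * (g x)\<^sup>2) \<partial>lborel))
      = (\<integral>\<^sup>+x. (\<Sum>i\<in>{1..n}. ennreal (indicator (cell n i) x * (g x)\<^sup>2)) \<partial>lborel)"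
    by (rule nn_integral_sum[symmetric]) measurable
  also have "\<dots> \<le> (\<integral>\<^sup>+x. ennreal (indicator {0..1} x * (g x)\<^sup>2) \<partial>lborel)"
  proof (rule nn_integral_mono)
    fix x
    have "(\<Sum>i\<in>{1..n}. ennreal (indicator (cell n i) x * (g x)\<^sup>2)) = ennreal (\<Sum>i\<in>{1..n}. indicator (cell n i) x * (g x)\<^sup>2)"
      by (rule sum_ennreal) simp
    also have "(\<Sum>i\<in>{1..n}. indicator (cell n i) x * (g x)\<^sup>2) = (\<Sum>i\<in>{1..n}. indicator (cell n i) x) * (g x)\<^sup>2"
      by (simp add: sum_distrib_right)
    also have "\<dots> \<le> indicator {0..1} x * (g x)\<^sup>2"
      by (rule mult_right_mono[OF sum_ind_le[OF n]]) simp
    finally show "(\<Sum>i\<in>{1..n}. ennreal (indicator (cell n i) x * (g x)\<^sup>2)) \<le> ennreal (indicator {0..1} x * (g x)\<^sup>2)"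
      by (simp add: ennreal_leI)
  qed
  finally show ?thesis .
qed



lemma measure_cell: "n \<ge> 1 \<Longrightarrow> i \<ge> 1 \<Longrightarrow> measure lborel (cell n i) = dx n"
  by (rule measure_eq_emeasure_eq_ennreal) (auto simp: emeasure_cell dx_def)

lemma int_cells:
  assumes n: "n \<ge> 1" and F: "\<And>i x. i \<in> {1..n} \<Longrightarrow> x \<in> cell n i \<Longrightarrow> F x = c i"
  shows "set_lebesgue_integral lborel {0..1} F = (\<Sum>i\<in>{1..n}. c i) * dx n"
proof -
  have pw: "indicator {0..1} x *\<^sub>R F x = (\<Sum>j\<in>{1..n}. indicator (cell n j) x * c j) + indicator {1} x * F 1" for x
  proof (cases "\<exists>i\<in>{1..n}. x \<in> cell n i")
    case True
    then obtain i where i: "i \<in> {1..n}" "x \<in> cell n i" by blast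
    from cell_sub[OF n i] have "x \<in> {0..1}" "x \<noteq> 1" by auto
    then show ?thesis using sum_ind_cell[OF n i, of c] F[OF i] by simp
  next
    case False
    then have s0: "(\<Sum>j\<in>{1..n}. indicator (cell n j) x * c j) = 0" by (intro sum.neutral) auto
    have "x \<notin> {0..<1}" using False cell_exists[OF n] by auto
    then show ?thesis using s0 by (cases "x = 1") (auto simp: indicator_def)
  qed
  have ic: "integrable lborel (\<lambda>x. indicator (cell n j) x * c j)" if "j \<in> {1..n}" for j
    using that emeasure_cell[OF n, of j] by (intro integrable_mult_left) auto
  have i1: "integrable lborel (\<lambda>x. indicator {1::real} x * F 1)"
    by (intro integrable_mult_left) auto
  have isum: "integrable lborel (\<lambda>x. \<Sum>j\<in>{1..n}. indicator (cell n j) x * c j)"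
    by (rule Bochner_Integration.integrable_sum[where f="\<lambda>j x. indicator (cell n j) x * c j"]) (rule ic)
  have "set_lebesgue_integral lborel {0..1} F = (\<integral>x. (\<Sum>j\<in>{1..n}. indicator (cell n j) x * c j) + indicator {1} x * F 1 \<partial>lborel)"
    unfolding set_lebesgue_integral_def pw ..
  also have "\<dots> = (\<integral>x. (\<Sum>j\<in>{1..n}. indicator (cell n j) x * c j) \<partial>lborel) + (\<integral>x. indicator {1::real} x * F 1 \<partial>lborel)"
    using isum i1 by (rule Bochner_Integration.integral_add)
  also have "(\<integral>x. indicator {1::real} x * F 1 \<partial>lborel) = 0" by simp
  also have "(\<integral>x. (\<Sum>j\<in>{1..n}. indicator (cell n j) x * c j) \<partial>lborel) = (\<Sum>j\<in>{1..n}. (\<integral>x. indicator (cell n j) x * c j \<partial>lborel))"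
    by (rule Bochner_Integration.integral_sum[where f="\<lambda>j x. indicator (cell n j) x * c j"]) (rule ic)
  also have "\<dots> = (\<Sum>j\<in>{1..n}. c j * dx n)"
    by (rule sum.cong) (auto simp: measure_cell[OF n])
  finally show ?thesis by (simp add: sum_distrib_right)
qed

lemma step_at:
  assumes n: "n \<ge> 1" and i: "i \<in> {1..n}" and x: "x \<in> cell n i"
  shows "step_fun n w t x = w i t"
  unfolding step_fun_def using sum_ind_cell[OF n i x, of "\<lambda>j. w j t"] .

lemma diffq_at:
  assumes n: "n \<ge> 1" and W: "\<And>j y. j \<in> {1..n} \<Longrightarrow> y \<in> cell n j \<Longrightarrow> W t y = c j"
    and i: "i \<in> {1..n}" and x: "x \<in> cell n i"
  shows "diffq n W t x = (if i = 1 then 0 else (c i - c (i - 1)) / dx n)"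
proof -
  have np: "real n > 0" using n by simp
  from cell_mem[OF n, of i x] i x have m: "real i - 1 \<le> x * real n" "x * real n < real i" by auto
  show ?thesis
  proof (cases "i = 1")
    case True
    then have "x * real n < 1" using m by simp
    then have "x < dx n" using np unfolding dx_def by (simp add: field_simps)
    then show ?thesis using True unfolding diffq_def by simp
  next
    case False
    then have i2: "i \<ge> 2" using i by auto
    then have "1 \<le> x * real n" using m by linarith
    then have xd: "\<not> x < dx n" using np unfolding dx_def by (simp add: field_simps)
    have ri: "real (i - 1) = real i - 1" using i2 by (simp add: of_nat_diff)
    have "(x - dx n) * real n = x * real n - 1" using np unfolding dx_def by (simp add: field_simps)
    then have "x - dx n \<in> cell n (i - 1)" using cell_mem[OF n, of "i - 1" "x - dx n"] i2 m ri by simp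
    moreover have "i - 1 \<in> {1..n}" using i i2 by auto
    ultimately have "W t (x - dx n) = c (i - 1)" using W by blast
    moreover have "W t x = c i" using W i x by blast
    ultimately show ?thesis using False xd unfolding diffq_def by simp
  qed
qed

lemma sum_shift1: "(\<Sum>i\<in>{1..(n::nat)}. if i = 1 then 0 else f (i - 1)) = (\<Sum>i\<in>{1..<n}. (f i :: real))"
  by (induction n) (auto simp: atLeastLessThanSuc)

lemma int_V2:
  assumes n: "n \<ge> 1"
  shows "set_lebesgue_integral lborel {0..1} (\<lambda>x. (G (step_fun n v t x))\<^sup>2) = (\<Sum>i\<in>{1..n}. (G (v i t))\<^sup>2) * dx n"
  by (rule int_cells[OF n]) (simp add: step_at[OF n])

lemma int_dV2:
  assumes n: "n \<ge> 1"
  shows "set_lebesgue_integral lborel {0..1} (\<lambda>x. (diffq n (\<lambda>t x. G (step_fun n v t x)) t x)\<^sup>2)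
    = (\<Sum>i\<in>{1..<n}. ((G (v (Suc i) t) - G (v i t)) / dx n)\<^sup>2) * dx n"
proof -
  have "set_lebesgue_integral lborel {0..1} (\<lambda>x. (diffq n (\<lambda>t x. G (step_fun n v t x)) t x)\<^sup>2)
    = (\<Sum>i\<in>{1..n}. if i = 1 then 0 else ((G (v (Suc (i - 1)) t) - G (v (i - 1) t)) / dx n)\<^sup>2) * dx n"
  proof (rule int_cells[OF n])
    fix i x assume i: "i \<in> {1..n}" and x: "x \<in> cell n i"
    have "diffq n (\<lambda>t x. G (step_fun n v t x)) t x = (if i = 1 then 0 else (G (v i t) - G (v (i - 1) t)) / dx n)"
      by (rule diffq_at[OF n _ i x]) (simp add: step_at[OF n])
    then show "(diffq n (\<lambda>t x. G (step_fun n v t x)) t x)\<^sup>2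
       = (if i = 1 then 0 else ((G (v (Suc (i - 1)) t) - G (v (i - 1) t)) / dx n)\<^sup>2)"
      using i by auto
  qed
  also have "\<dots> = (\<Sum>i\<in>{1..<n}. ((G (v (Suc i) t) - G (v i t)) / dx n)\<^sup>2) * dx n"
    by (subst sum_shift1[where n=n and f="\<lambda>i. ((G (v (Suc i) t) - G (v i t)) / dx n)\<^sup>2"]) simp
  finally show ?thesis .
qed



lemma mono_props:
  fixes h h' :: "real \<Rightarrow> real"
  assumes h1: "\<And>x. (h has_real_derivative h' x) (at x)"
    and hbd: "\<And>x. dh \<le> h' x \<and> h' x \<le> Ch" and dh0: "dh \<ge> 0"
  shows "(y - x) * (h y - h x) \<ge> dh * (y - x)\<^sup>2" "\<bar>h y - h x\<bar> \<le> Ch * \<bar>y - x\<bar>"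
proof -
  have gen: "(b - a) * (h b - h a) \<ge> dh * (b - a)\<^sup>2 \<and> \<bar>h b - h a\<bar> \<le> Ch * \<bar>b - a\<bar>" if ab: "a < b" for a b
  proof -
    obtain z where z: "h b - h a = (b - a) * h' z" using MVT2[OF ab, of h h'] h1 by blast
    have p: "b - a > 0" using ab by simp
    have "(b - a) * (h b - h a) = (b - a)\<^sup>2 * h' z" using z by (simp add: power2_eq_square)
    moreover have "(b - a)\<^sup>2 * h' z \<ge> (b - a)\<^sup>2 * dh" using hbd[of z] by (intro mult_left_mono) auto
    moreover have "\<bar>h b - h a\<bar> = (b - a) * h' z" 
    proof -
      have "h' z \<ge> 0" using hbd[of z] dh0 by linarith
      then show ?thesis using z p by (simp add: abs_mult)
    qed
    moreover have "(b - a) * h' z \<le> (b - a) * Ch" using hbd[of z] p by simp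
    ultimately show ?thesis using p by (simp add: mult.commute)
  qed
  have "(y - x) * (h y - h x) \<ge> dh * (y - x)\<^sup>2 \<and> \<bar>h y - h x\<bar> \<le> Ch * \<bar>y - x\<bar>"
  proof (cases x y rule: linorder_cases)
    case less then show ?thesis using gen by blast
  next
    case equal then show ?thesis by simp
  next
    case greater
    from gen[OF this] have g: "(x - y) * (h x - h y) \<ge> dh * (x - y)\<^sup>2" "\<bar>h x - h y\<bar> \<le> Ch * \<bar>x - y\<bar>" by auto
    have "(x - y) * (h x - h y) = (y - x) * (h y - h x)" by (simp add: algebra_simps)
    moreover have "(x - y)\<^sup>2 = (y - x)\<^sup>2" by (simp add: power2_commute)
    moreover have "\<bar>h x - h y\<bar> = \<bar>h y - h x\<bar>" "\<bar>x - y\<bar> = \<bar>y - x\<bar>" by (simp_all add: abs_minus_commute)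
    ultimately show ?thesis using g by simp
  qed
  then show "(y - x) * (h y - h x) \<ge> dh * (y - x)\<^sup>2" "\<bar>h y - h x\<bar> \<le> Ch * \<bar>y - x\<bar>" by auto
qed

lemma term_ineq:
  fixes d dh Ch Cb B r x y Dl :: real
  assumes d: "d > 0" and dh: "dh > 0" and Cb: "Cb \<ge> 0" and Ch: "Ch \<ge> 0"
    and m1: "(y - x) * Dl \<ge> dh * (y - x)\<^sup>2" and m2: "\<bar>Dl\<bar> \<le> Ch * \<bar>y - x\<bar>" and B: "\<bar>B\<bar> \<le> Cb"
  shows "- (((y - x) / d) + B * r) * Dl \<le> d * (- (dh / 2) * ((y - x) / d)\<^sup>2 + ((Cb * Ch)\<^sup>2 / (2 * dh)) * r\<^sup>2)"
proof -
  define D where "D = (y - x) / d"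
  have yx: "y - x = d * D" unfolding D_def using d by simp
  have a1: "D * Dl \<ge> dh * d * D\<^sup>2"
  proof -
    have "d * (D * Dl) \<ge> d * (dh * d * D\<^sup>2)" using m1 unfolding yx by (simp add: power2_eq_square algebra_simps)
    then show ?thesis using d by simp
  qed
  have a2: "\<bar>B * r * Dl\<bar> \<le> Cb * Ch * d * \<bar>r\<bar> * \<bar>D\<bar>"
  proof -
    have "\<bar>B * r * Dl\<bar> = \<bar>B\<bar> * \<bar>r\<bar> * \<bar>Dl\<bar>" by (simp add: abs_mult)
    also have "\<dots> \<le> Cb * \<bar>r\<bar> * (Ch * (d * \<bar>D\<bar>))"
      using m2 B d unfolding yx by (intro mult_mono) (auto simp: abs_mult)
    finally show ?thesis by (simp add: algebra_simps)
  qed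
  have a3: "Cb * Ch * \<bar>r\<bar> * \<bar>D\<bar> \<le> dh / 2 * D\<^sup>2 + (Cb * Ch)\<^sup>2 / (2 * dh) * r\<^sup>2"
  proof -
    have "0 \<le> (dh * \<bar>D\<bar> - Cb * Ch * \<bar>r\<bar>)\<^sup>2 / (2 * dh)" using dh by simp
    also have "(dh * \<bar>D\<bar> - Cb * Ch * \<bar>r\<bar>)\<^sup>2 / (2 * dh) = dh / 2 * D\<^sup>2 + (Cb * Ch)\<^sup>2 / (2 * dh) * r\<^sup>2 - Cb * Ch * \<bar>r\<bar> * \<bar>D\<bar>"
      using dh by (simp add: power2_eq_square field_simps)
    finally show ?thesis by simp
  qed
  have "- (D + B * r) * Dl = - (D * Dl) - B * r * Dl" by (simp add: algebra_simps)
  also have "\<dots> \<le> - (dh * d * D\<^sup>2) + Cb * Ch * d * \<bar>r\<bar> * \<bar>D\<bar>" using a1 a2 by linarith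
  also have "\<dots> = d * (- (dh * D\<^sup>2) + Cb * Ch * \<bar>r\<bar> * \<bar>D\<bar>)" by (simp add: algebra_simps)
  also have "\<dots> \<le> d * (- (dh / 2) * D\<^sup>2 + ((Cb * Ch)\<^sup>2 / (2 * dh)) * r\<^sup>2)"
    using a3 d by (intro mult_left_mono) auto
  finally show ?thesis unfolding D_def .
qed

lemma telescope_gen:
  fixes H A :: "nat \<Rightarrow> real"
  assumes "A 0 = 0"
  shows "(\<Sum>i\<in>{1..m}. H i * (A i - A (i - 1))) = H m * A m - (\<Sum>i\<in>{1..<m}. A i * (H (Suc i) - H i))"
proof (induction m)
  case 0 then show ?case using assms by simp
next
  case (Suc m)
  show ?case
  proof (cases "m = 0")
    case True then show ?thesis using assms by simp
  next
    case False
    then have "{1..<Suc m} = insert m {1..<m}" by auto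
    then have "(\<Sum>i\<in>{1..<Suc m}. A i * (H (Suc i) - H i)) = A m * (H (Suc m) - H m) + (\<Sum>i\<in>{1..<m}. A i * (H (Suc i) - H i))"
      by simp
    then show ?thesis using Suc.IH by (simp add: algebra_simps)
  qed
qed

lemma telescope:
  fixes H A :: "nat \<Rightarrow> real"
  assumes "A 0 = 0" "A n = 0"
  shows "(\<Sum>i\<in>{1..n}. H i * (A i - A (i - 1))) = - (\<Sum>i\<in>{1..<n}. A i * (H (Suc i) - H i))"
  using telescope_gen[of A H n] assms by simp

lemma intX:
  fixes g S :: "real \<Rightarrow> real"
  assumes gc: "continuous_on {0..t} g" and gle: "\<And>s. s \<in> {0..t} \<Longrightarrow> g s \<le> K * S s"
    and K: "K \<ge> 0" and S0: "\<And>s. S s \<ge> 0"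
    and SR: "\<And>s. s \<in> {0..T} \<Longrightarrow> ennreal (S s) \<le> R s" and Rm: "R \<in> borel_measurable lborel"
    and SP: "(\<integral>\<^sup>+s. indicator {0..T} s * R s \<partial>lborel) \<le> ennreal P"
    and t: "0 \<le> t" "t \<le> T" and P: "P \<ge> 0"
  shows "integral {0..t} g \<le> K * P"
proof -
  have gpc: "continuous_on {0..t} (\<lambda>s. max (g s) 0)" using gc by (intro continuous_intros)
  have "integral {0..t} g \<le> integral {0..t} (\<lambda>s. max (g s) 0)"
    using gc gpc by (intro integral_le integrable_continuous_real) auto
  also have "\<dots> = set_lebesgue_integral lborel {0..t} (\<lambda>s. max (g s) 0)"
    using set_borel_integral_eq_integral(2)[OF borel_integrable_atLeastAtMost'[OF gpc]] by simp
  finally have i1: "integral {0..t} g \<le> set_lebesgue_integral lborel {0..t} (\<lambda>s. max (g s) 0)" .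
  have "ennreal (set_lebesgue_integral lborel {0..t} (\<lambda>s. max (g s) 0))
      = (\<integral>\<^sup>+s. ennreal (indicator {0..t} s *\<^sub>R max (g s) 0) \<partial>lborel)"
    using borel_integrable_atLeastAtMost'[OF gpc] unfolding set_integrable_def set_lebesgue_integral_def
    by (intro nn_integral_eq_integral[symmetric]) auto
  also have "\<dots> \<le> (\<integral>\<^sup>+s. ennreal K * (indicator {0..T} s * R s) \<partial>lborel)"
  proof (rule nn_integral_mono)
    fix s
    show "ennreal (indicator {0..t} s *\<^sub>R max (g s) 0) \<le> ennreal K * (indicator {0..T} s * R s)"
    proof (cases "s \<in> {0..t}")
      case True
      then have "s \<in> {0..T}" using t by auto
      moreover have "max (g s) 0 \<le> K * S s" using gle[OF True] K S0[of s] by simp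
      ultimately have "ennreal (indicator {0..t} s *\<^sub>R max (g s) 0) \<le> ennreal K * ennreal (S s)"
        using True K S0[of s] by (simp add: ennreal_mult[symmetric] ennreal_leI)
      also have "\<dots> \<le> ennreal K * R s" using SR[OF \<open>s \<in> {0..T}\<close>] by (rule mult_left_mono) simp
      finally show ?thesis using \<open>s \<in> {0..T}\<close> by simp
    next
      case False then show ?thesis by simp
    qed
  qed
  also have "\<dots> \<le> ennreal K * ennreal P"
    using SP Rm by (subst nn_integral_cmult) (auto intro: mult_left_mono)
  finally have "ennreal (set_lebesgue_integral lborel {0..t} (\<lambda>s. max (g s) 0)) \<le> ennreal (K * P)"
    using K P by (simp add: ennreal_mult)
  then have "set_lebesgue_integral lborel {0..t} (\<lambda>s. max (g s) 0) \<le> K * P"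
    using K P by (simp add: ennreal_le_iff)
  with i1 show ?thesis by simp
qed



lemma core:
  fixes h h' h'' b v0 :: "real \<Rightarrow> real"
    and p :: "real \<times> real \<Rightarrow> real"
    and T \<delta>h Ch \<delta>b Cb \<delta> :: real and n :: nat and v v' :: "nat \<Rightarrow> real \<Rightarrow> real"
  assumes T: "T > 0"
    and h1: "\<And>x. (h has_real_derivative h' x) (at x)"
    and h2: "\<And>x. (h' has_real_derivative h'' x) (at x)"
    and hpos: "\<delta>h > 0" "Ch > 0"
    and hbd: "\<And>x. \<delta>h \<le> h' x \<and> h' x \<le> Ch"
    and bpos: "\<delta>b > 0" "Cb > 0"
    and bbd: "\<And>x. \<delta>b \<le> b x \<and> b x \<le> Cb"
    and pmeas: "p \<in> borel_measurable lborel"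
    and pL2: "set_integrable lborel (QT T) (\<lambda>z. (p z)\<^sup>2)"
    and v0meas: "v0 \<in> borel_measurable lborel"
    and v0L2: "set_integrable lborel {0..1} (\<lambda>x. (v0 x)\<^sup>2)"
    and n: "n \<ge> 2" and d: "\<delta> > 0" and sol: "scheme_sol h' b p v0 T \<delta> n v v'"
  defines "P \<equiv> set_lebesgue_integral lborel (QT T) (\<lambda>z. (p z)\<^sup>2)"
    and "I0 \<equiv> set_lebesgue_integral lborel {0..1} (\<lambda>x. (v0 x)\<^sup>2)"
    and "K \<equiv> (Cb * Ch)\<^sup>2 / (2 * \<delta>h)"
    and "Qd \<equiv> (\<lambda>t. (\<Sum>i\<in>{1..<n}. ((v (Suc i) t - v i t) / dx n)\<^sup>2) * dx n)"
    and "Zd \<equiv> (\<lambda>t. (\<Sum>i\<in>{1..<n}. ((h (v (Suc i) t) - h (v i t)) / dx n)\<^sup>2) * dx n)"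
  shows "\<forall>t\<in>{0..T}. (\<Sum>i\<in>{1..n}. (h (v i t))\<^sup>2) * dx n \<le> 2 * ((h 0)\<^sup>2 + Ch\<^sup>2 * I0 + K * P)"
    and "integral {0..T} Qd \<le> 2 * ((h 0)\<^sup>2 + Ch\<^sup>2 * I0 + K * P) / \<delta>h"
    and "continuous_on {0..T} Qd" and "continuous_on {0..T} Zd"
    and "\<forall>t. Zd t \<le> Ch\<^sup>2 * Qd t"
proof -
  define dxn where "dxn = dx n"
  have dp: "dxn > 0" unfolding dxn_def dx_def using n by simp
  have ndx: "real n * dxn = 1" unfolding dxn_def dx_def using n by simp
  have n1: "n \<ge> 1" using n by simp
  from sol have
    vd: "\<And>i t. i \<in> {1..n} \<Longrightarrow> t \<in> {0..T} \<Longrightarrow> (v i has_real_derivative v' i t) (at t within {0..T})"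
    and v'c: "\<And>i. i \<in> {1..n} \<Longrightarrow> continuous_on {0..T} (v' i)"
    and vinit: "\<And>i. i \<in> {1..n} \<Longrightarrow> v i 0 = v0_i v0 n i"
    and eq1: "\<And>t. t \<in> {0..T} \<Longrightarrow> h' (v 1 t) * v' 1 t = flux b p T \<delta> n v 1 t / dx n"
    and eqm: "\<And>t i. t \<in> {0..T} \<Longrightarrow> 2 \<le> i \<Longrightarrow> i \<le> n - 1 \<Longrightarrow>
           h' (v i t) * v' i t = (flux b p T \<delta> n v i t - flux b p T \<delta> n v (i - 1) t) / dx n"
    and eqn: "\<And>t. t \<in> {0..T} \<Longrightarrow> h' (v n t) * v' n t = - flux b p T \<delta> n v (n - 1) t / dx n"
    unfolding scheme_sol_def by auto
  have vc: "continuous_on {0..T} (v i)" if "i \<in> {1..n}" for i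
    by (rule DERIV_continuous_on[OF vd[OF that]])
  have hc: "continuous_on UNIV h" using h1 by (intro has_real_derivative_imp_continuous_on) auto
  have h'c: "continuous_on UNIV h'" using h2 by (intro has_real_derivative_imp_continuous_on) auto
  have hvc: "continuous_on {0..T} (\<lambda>t. h (v i t))" if "i \<in> {1..n}" for i
    by (rule continuous_on_compose2[OF hc vc[OF that]]) auto
  have h'vc: "continuous_on {0..T} (\<lambda>t. h' (v i t))" if "i \<in> {1..n}" for i
    by (rule continuous_on_compose2[OF h'c vc[OF that]]) auto
  have vSc: "continuous_on {0..T} (v (Suc i))" "continuous_on {0..T} (v i)" if "i \<in> {1..<n}" for i
    using vc that by auto
  have hvSc: "continuous_on {0..T} (\<lambda>t. h (v (Suc i) t))" "continuous_on {0..T} (\<lambda>t. h (v i t))" if "i \<in> {1..<n}" for i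
    using hvc that by auto
  show Qdc: "continuous_on {0..T} Qd" unfolding Qd_def
    by (intro continuous_intros vSc) (use dp in \<open>auto simp: dxn_def\<close>)
  show "continuous_on {0..T} Zd" unfolding Zd_def
    by (intro continuous_intros hvSc) (use dp in \<open>auto simp: dxn_def\<close>)
  show "\<forall>t. Zd t \<le> Ch\<^sup>2 * Qd t"
  proof
    fix t
    have "((h (v (Suc i) t) - h (v i t)) / dx n)\<^sup>2 \<le> Ch\<^sup>2 * ((v (Suc i) t - v i t) / dx n)\<^sup>2" for i
    proof -
      have a: "\<bar>h (v (Suc i) t) - h (v i t)\<bar> \<le> Ch * \<bar>v (Suc i) t - v i t\<bar>"
        using mono_props(2)[OF h1 hbd] hpos by simp
      have "\<bar>(h (v (Suc i) t) - h (v i t)) / dx n\<bar> \<le> \<bar>Ch * ((v (Suc i) t - v i t) / dx n)\<bar>"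
        using a dp hpos unfolding dxn_def by (simp add: abs_mult divide_right_mono)
      then have "((h (v (Suc i) t) - h (v i t)) / dx n)\<^sup>2 \<le> (Ch * ((v (Suc i) t - v i t) / dx n))\<^sup>2"
        by (simp only: abs_le_square_iff)
      then show ?thesis by (simp only: power_mult_distrib)
    qed
    then have "(\<Sum>i\<in>{1..<n}. ((h (v (Suc i) t) - h (v i t)) / dx n)\<^sup>2) \<le> Ch\<^sup>2 * (\<Sum>i\<in>{1..<n}. ((v (Suc i) t - v i t) / dx n)\<^sup>2)"
      by (simp add: sum_distrib_left sum_mono)
    then show "Zd t \<le> Ch\<^sup>2 * Qd t" unfolding Zd_def Qd_def using dp unfolding dxn_def
      by (simp add: mult.assoc mult_right_mono)
  qed
  define A where "A i t = (if 1 \<le> i \<and> i \<le> n - 1 then flux b p T \<delta> n v i t else 0)" for i t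
  have eqA: "h' (v i t) * v' i t = (A i t - A (i - 1) t) / dxn" if t: "t \<in> {0..T}" and i: "i \<in> {1..n}" for i t
  proof -
    consider "i = 1" | "2 \<le> i \<and> i \<le> n - 1" | "i = n" using i n by fastforce
    then show ?thesis
    proof cases
      case 1 then show ?thesis using eq1[OF t] n unfolding A_def dxn_def by simp
    next
      case 2 then show ?thesis using eqm[OF t] n unfolding A_def dxn_def by auto
    next
      case 3
      have "\<not> n \<le> n - 1" "1 \<le> n - 1" "n - 1 \<le> n - 1" using n by auto
      then show ?thesis using eqn[OF t] 3 unfolding A_def dxn_def by simp
    qed
  qed
  define E where "E t = dxn / 2 * (\<Sum>i\<in>{1..n}. h (v i t) * h (v i t))" for t
  define E' where "E' t = dxn / 2 * (\<Sum>i\<in>{1..n}. (h' (v i t) * v' i t) * h (v i t) + (h' (v i t) * v' i t) * h (v i t))" for t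
  have Eder: "(E has_real_derivative E' t) (at t within {0..T})" if t: "t \<in> {0..T}" for t
  proof -
    have hd: "((\<lambda>t. h (v i t)) has_real_derivative h' (v i t) * v' i t) (at t within {0..T})" if "i \<in> {1..n}" for i
      by (rule DERIV_chain2[OF h1 vd[OF that t]])
    have "((\<lambda>t. \<Sum>i\<in>{1..n}. h (v i t) * h (v i t)) has_real_derivative
        (\<Sum>i\<in>{1..n}. (h' (v i t) * v' i t) * h (v i t) + (h' (v i t) * v' i t) * h (v i t))) (at t within {0..T})"
      using hd by (intro DERIV_sum DERIV_mult) auto
    then show ?thesis unfolding E_def[abs_def] E'_def by (rule DERIV_cmult)
  qed
  have E'c: "continuous_on {0..T} E'" unfolding E'_def[abs_def]
    by (intro continuous_intros hvc h'vc v'c) auto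
  have E'eq: "E' t = - (\<Sum>i\<in>{1..<n}. A i t * (h (v (Suc i) t) - h (v i t)))" if t: "t \<in> {0..T}" for t
  proof -
    have "E' t = dxn / 2 * (\<Sum>i\<in>{1..n}. 2 * (h (v i t) * (h' (v i t) * v' i t)))"
      unfolding E'_def by (intro arg_cong[where f="\<lambda>x. dxn / 2 * x"] sum.cong) auto
    also have "\<dots> = dxn * (\<Sum>i\<in>{1..n}. h (v i t) * (h' (v i t) * v' i t))"
      by (simp add: sum_distrib_left[symmetric])
    also have "\<dots> = (\<Sum>i\<in>{1..n}. h (v i t) * (A i t - A (i - 1) t))"
      unfolding sum_distrib_left using dp by (intro sum.cong) (auto simp: eqA[OF t])
    also have "\<dots> = - (\<Sum>i\<in>{1..<n}. A i t * (h (v (Suc i) t) - h (v i t)))"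
      by (rule telescope) (auto simp: A_def)
    finally show ?thesis .
  qed
  define S where "S t = (\<Sum>i\<in>{1..<n}. (rho_i p T \<delta> n i t)\<^sup>2 * dxn)" for t
  have S0: "S t \<ge> 0" for t unfolding S_def using dp by (simp add: sum_nonneg)
  have K0: "K \<ge> 0" unfolding K_def using hpos by simp
  have Qd_eq: "Qd t = (\<Sum>i\<in>{1..<n}. ((v (Suc i) t - v i t) / dxn)\<^sup>2 * dxn)" for t
    unfolding Qd_def dxn_def by (simp add: sum_distrib_right)
  have Eineq: "E' t + \<delta>h / 2 * Qd t \<le> K * S t" if t: "t \<in> {0..T}" for t
  proof -
    have ti: "- (A i t * (h (v (Suc i) t) - h (v i t))) \<le> dxn * (- (\<delta>h / 2) * ((v (Suc i) t - v i t) / dxn)\<^sup>2 + K * (rho_i p T \<delta> n i t)\<^sup>2)"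
      if i: "i \<in> {1..<n}" for i
    proof -
      have Ai: "A i t = (v (Suc i) t - v i t) / dxn + b ((v i t + v (Suc i) t) / 2) * rho_i p T \<delta> n i t"
        using i unfolding A_def flux_def dxn_def by auto
      have bb: "\<bar>b ((v i t + v (Suc i) t) / 2)\<bar> \<le> Cb" using bbd[of "(v i t + v (Suc i) t) / 2"] bpos by auto
      have m1: "(v (Suc i) t - v i t) * (h (v (Suc i) t) - h (v i t)) \<ge> \<delta>h * (v (Suc i) t - v i t)\<^sup>2"
        using mono_props(1)[OF h1 hbd] hpos by simp
      have m2: "\<bar>h (v (Suc i) t) - h (v i t)\<bar> \<le> Ch * \<bar>v (Suc i) t - v i t\<bar>"
        using mono_props(2)[OF h1 hbd] hpos by simp
      have "- (((v (Suc i) t - v i t) / dxn) + b ((v i t + v (Suc i) t) / 2) * rho_i p T \<delta> n i t) * (h (v (Suc i) t) - h (v i t))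
          \<le> dxn * (- (\<delta>h / 2) * ((v (Suc i) t - v i t) / dxn)\<^sup>2 + ((Cb * Ch)\<^sup>2 / (2 * \<delta>h)) * (rho_i p T \<delta> n i t)\<^sup>2)"
        by (rule term_ineq[OF dp hpos(1) _ _ m1 m2 bb]) (use hpos bpos in auto)
      then show ?thesis unfolding Ai K_def by (simp only: minus_mult_left)
    qed
    have "E' t \<le> (\<Sum>i\<in>{1..<n}. dxn * (- (\<delta>h / 2) * ((v (Suc i) t - v i t) / dxn)\<^sup>2 + K * (rho_i p T \<delta> n i t)\<^sup>2))"
      unfolding E'eq[OF t] sum_negf[symmetric] by (rule sum_mono) (rule ti)
    also have "\<dots> = (\<Sum>i\<in>{1..<n}. (- (\<delta>h / 2)) * (((v (Suc i) t - v i t) / dxn)\<^sup>2 * dxn) + K * ((rho_i p T \<delta> n i t)\<^sup>2 * dxn))"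
      by (rule sum.cong) (auto simp: algebra_simps)
    also have "\<dots> = (- (\<delta>h / 2)) * (\<Sum>i\<in>{1..<n}. ((v (Suc i) t - v i t) / dxn)\<^sup>2 * dxn) + K * (\<Sum>i\<in>{1..<n}. (rho_i p T \<delta> n i t)\<^sup>2 * dxn)"
      by (simp only: sum.distrib sum_distrib_left)
    also have "\<dots> = - (\<delta>h / 2) * Qd t + K * S t"
      unfolding Qd_eq S_def by simp
    finally show ?thesis by simp
  qed
  have pm'[measurable]: "p \<in> borel_measurable borel" using pmeas by simp
  have rm[measurable]: "rho p T \<delta> \<in> borel_measurable borel" using rho_meas[OF pmeas] by simp
  define R where "R t = (\<integral>\<^sup>+\<xi>. ennreal ((rho p T \<delta> (t, \<xi>))\<^sup>2) \<partial>lborel)" for t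
  have Rm: "R \<in> borel_measurable lborel" unfolding R_def[abs_def]
    by (rule lborel.borel_measurable_nn_integral) measurable
  have SR: "ennreal (S t) \<le> R t" for t
  proof -
    have gm[measurable]: "(\<lambda>\<xi>. rho p T \<delta> (t, \<xi>)) \<in> borel_measurable borel" by measurable
    have "ennreal (S t) = (\<Sum>i\<in>{1..<n}. ennreal ((rho_i p T \<delta> n i t)\<^sup>2 * dxn))"
      unfolding S_def using dp by (subst sum_ennreal) auto
    also have "\<dots> \<le> (\<Sum>i\<in>{1..n}. ennreal ((rho_i p T \<delta> n i t)\<^sup>2 * dxn))"
      by (rule sum_mono2) auto
    also have "\<dots> \<le> (\<Sum>i\<in>{1..n}. (\<integral>\<^sup>+x. ennreal (indicator (cell n i) x * (rho p T \<delta> (t, x))\<^sup>2) \<partial>lborel))"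
      by (rule sum_mono) (use cell_avg[OF n1 _ gm] in \<open>auto simp: rho_i_def dxn_def\<close>)
    also have "\<dots> \<le> (\<integral>\<^sup>+x. ennreal (indicator {0..1} x * (rho p T \<delta> (t, x))\<^sup>2) \<partial>lborel)"
      by (rule cells_sum_nn[OF n1 gm])
    also have "\<dots> \<le> R t" unfolding R_def
      by (rule nn_integral_mono) (auto simp: indicator_def intro!: ennreal_leI)
    finally show ?thesis .
  qed
  have SP: "(\<integral>\<^sup>+s. indicator {0..T} s * R s \<partial>lborel) \<le> ennreal P"
  proof -
    have "(\<integral>\<^sup>+s. indicator {0..T} s * R s \<partial>lborel) \<le> (\<integral>\<^sup>+s. R s \<partial>lborel)"
      by (rule nn_integral_mono) (auto simp: indicator_def)
    also have "\<dots> \<le> ennreal P" unfolding R_def P_def by (rule rho_slices[OF pmeas d pL2])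
    finally show ?thesis .
  qed
  have P0: "P \<ge> 0" unfolding P_def set_lebesgue_integral_def by (simp add: indicator_def)
  have I00: "I0 \<ge> 0" unfolding I0_def set_lebesgue_integral_def by (simp add: indicator_def)
  have E0: "E 0 \<le> (h 0)\<^sup>2 + Ch\<^sup>2 * I0"
  proof -
    have v0m[measurable]: "v0 \<in> borel_measurable borel" using v0meas by simp
    have "ennreal (\<Sum>i\<in>{1..n}. (v0_i v0 n i)\<^sup>2 * dxn) = (\<Sum>i\<in>{1..n}. ennreal ((v0_i v0 n i)\<^sup>2 * dxn))"
      using dp by (subst sum_ennreal) auto
    also have "\<dots> \<le> (\<Sum>i\<in>{1..n}. (\<integral>\<^sup>+x. ennreal (indicator (cell n i) x * (v0 x)\<^sup>2) \<partial>lborel))"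
      by (rule sum_mono) (use cell_avg[OF n1 _ v0m] in \<open>auto simp: v0_i_def dxn_def\<close>)
    also have "\<dots> \<le> (\<integral>\<^sup>+x. ennreal (indicator {0..1} x * (v0 x)\<^sup>2) \<partial>lborel)"
      by (rule cells_sum_nn[OF n1 v0m])
    also have "\<dots> = ennreal I0"
      using v0L2 unfolding I0_def set_integrable_def set_lebesgue_integral_def
      by (simp add: nn_integral_eq_integral)
    finally have sv: "(\<Sum>i\<in>{1..n}. (v0_i v0 n i)\<^sup>2 * dxn) \<le> I0" using I00 by (simp add: ennreal_le_iff)
    have hx: "h x * h x \<le> 2 * (h 0)\<^sup>2 + 2 * Ch\<^sup>2 * x\<^sup>2" for x
    proof -
      have "\<bar>h x - h 0\<bar> \<le> Ch * \<bar>x\<bar>" using mono_props(2)[OF h1 hbd, of x 0] hpos by simp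
      then have "\<bar>h x\<bar> \<le> \<bar>h 0\<bar> + Ch * \<bar>x\<bar>" by linarith
      then have "\<bar>h x\<bar>\<^sup>2 \<le> (\<bar>h 0\<bar> + Ch * \<bar>x\<bar>)\<^sup>2" by (rule power_mono) simp
      also have "\<dots> \<le> 2 * (h 0)\<^sup>2 + 2 * Ch\<^sup>2 * x\<^sup>2"
        using sum_squares_ge_zero[of "\<bar>h 0\<bar> - Ch * \<bar>x\<bar>" 0]
        by (simp add: power2_eq_square algebra_simps)
      finally show ?thesis by (simp add: power2_eq_square)
    qed
    have "E 0 = dxn / 2 * (\<Sum>i\<in>{1..n}. h (v0_i v0 n i) * h (v0_i v0 n i))"
      unfolding E_def by (simp add: vinit)
    also have "\<dots> \<le> dxn / 2 * (\<Sum>i\<in>{1..n}. 2 * (h 0)\<^sup>2 + 2 * Ch\<^sup>2 * (v0_i v0 n i)\<^sup>2)"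
      using dp by (intro mult_left_mono sum_mono hx) auto
    also have "\<dots> = (h 0)\<^sup>2 * (real n * dxn) + Ch\<^sup>2 * (\<Sum>i\<in>{1..n}. (v0_i v0 n i)\<^sup>2 * dxn)"
    proof -
      have "(\<Sum>i\<in>{1..n}. 2 * (h 0)\<^sup>2 + 2 * Ch\<^sup>2 * (v0_i v0 n i)\<^sup>2) = 2 * (h 0)\<^sup>2 * real n + 2 * Ch\<^sup>2 * (\<Sum>i\<in>{1..n}. (v0_i v0 n i)\<^sup>2)"
        by (simp add: sum.distrib sum_distrib_left)
      moreover have "(\<Sum>i\<in>{1..n}. (v0_i v0 n i)\<^sup>2 * dxn) = (\<Sum>i\<in>{1..n}. (v0_i v0 n i)\<^sup>2) * dxn"
        by (rule sum_distrib_right[symmetric])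
      ultimately show ?thesis by (simp add: algebra_simps)
    qed
    also have "\<dots> \<le> (h 0)\<^sup>2 + Ch\<^sup>2 * I0" using sv ndx by (simp add: mult_left_mono)
    finally show ?thesis .
  qed
  have Enn: "E t \<ge> 0" for t unfolding E_def using dp by (simp add: sum_nonneg)
  have gc: "continuous_on {0..T} (\<lambda>s. E' s + \<delta>h / 2 * Qd s)" by (intro continuous_intros E'c Qdc)
  have main: "E t - E 0 + \<delta>h / 2 * integral {0..t} Qd \<le> K * P" and Qi0: "integral {0..t} Qd \<ge> 0"
    if t: "0 \<le> t" "t \<le> T" for t
  proof -
    have sub: "{0..t} \<subseteq> {0..T}" using t by auto
    have gct: "continuous_on {0..t} (\<lambda>s. E' s + \<delta>h / 2 * Qd s)" using continuous_on_subset[OF gc sub] .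
    have Qdct: "continuous_on {0..t} Qd" using continuous_on_subset[OF Qdc sub] .
    have E'ct: "continuous_on {0..t} E'" using continuous_on_subset[OF E'c sub] .
    have ftc: "(E' has_integral E t - E 0) {0..t}"
    proof (rule fundamental_theorem_of_calculus[OF t(1)])
      fix s assume s: "s \<in> {0..t}"
      then have "s \<in> {0..T}" using sub by auto
      from DERIV_subset[OF Eder[OF this] sub]
      show "(E has_vector_derivative E' s) (at s within {0..t})"
        by (simp add: has_real_derivative_iff_has_vector_derivative)
    qed
    have "integral {0..t} (\<lambda>s. E' s + \<delta>h / 2 * Qd s) = integral {0..t} E' + integral {0..t} (\<lambda>s. \<delta>h / 2 * Qd s)"
      using E'ct Qdct by (intro integral_add integrable_continuous_real continuous_intros) auto
    also have "integral {0..t} E' = E t - E 0" using ftc by (rule integral_unique)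
    also have "integral {0..t} (\<lambda>s. \<delta>h / 2 * Qd s) = \<delta>h / 2 * integral {0..t} Qd" by simp
    finally have eqi: "integral {0..t} (\<lambda>s. E' s + \<delta>h / 2 * Qd s) = E t - E 0 + \<delta>h / 2 * integral {0..t} Qd" .
    have "integral {0..t} (\<lambda>s. E' s + \<delta>h / 2 * Qd s) \<le> K * P"
      by (rule intX[OF gct _ K0 S0 SR Rm SP t P0]) (use Eineq sub in auto)
    then show "E t - E 0 + \<delta>h / 2 * integral {0..t} Qd \<le> K * P" using eqi by simp
    show "integral {0..t} Qd \<ge> 0"
      using Qdct unfolding Qd_def using dp by (intro integral_nonneg integrable_continuous_real) (auto simp: dxn_def sum_nonneg)
  qed
  show "\<forall>t\<in>{0..T}. (\<Sum>i\<in>{1..n}. (h (v i t))\<^sup>2) * dx n \<le> 2 * ((h 0)\<^sup>2 + Ch\<^sup>2 * I0 + K * P)"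
  proof
    fix t assume "t \<in> {0..T}"
    then have t: "0 \<le> t" "t \<le> T" by auto
    have "(\<Sum>i\<in>{1..n}. (h (v i t))\<^sup>2) * dx n = 2 * E t"
      unfolding E_def dxn_def by (simp add: power2_eq_square)
    also have "\<dots> \<le> 2 * ((h 0)\<^sup>2 + Ch\<^sup>2 * I0 + K * P)"
    proof -
      have "\<delta>h / 2 * integral {0..t} Qd \<ge> 0" using Qi0[OF t] hpos by simp
      then have "E t \<le> (h 0)\<^sup>2 + Ch\<^sup>2 * I0 + K * P" using main[OF t] E0 by linarith
      then show ?thesis by simp
    qed
    finally show "(\<Sum>i\<in>{1..n}. (h (v i t))\<^sup>2) * dx n \<le> 2 * ((h 0)\<^sup>2 + Ch\<^sup>2 * I0 + K * P)" .
  qed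
  show "integral {0..T} Qd \<le> 2 * ((h 0)\<^sup>2 + Ch\<^sup>2 * I0 + K * P) / \<delta>h"
  proof -
    have "\<delta>h / 2 * integral {0..T} Qd \<le> (h 0)\<^sup>2 + Ch\<^sup>2 * I0 + K * P"
      using main[of T] T E0 Enn[of T] by linarith
    then have "\<delta>h * integral {0..T} Qd \<le> 2 * ((h 0)\<^sup>2 + Ch\<^sup>2 * I0 + K * P)" by simp
    then show ?thesis using hpos by (simp add: field_simps)
  qed
qed



lemma v_sq_bound:
  fixes h h' :: "real \<Rightarrow> real"
  assumes h1: "\<And>x. (h has_real_derivative h' x) (at x)"
    and hbd: "\<And>x. dh \<le> h' x \<and> h' x \<le> Ch" and dh: "dh > 0"
  shows "x\<^sup>2 \<le> 2 / dh\<^sup>2 * ((h x)\<^sup>2 + (h 0)\<^sup>2)"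
proof -
  have m: "(x - 0) * (h x - h 0) \<ge> dh * (x - 0)\<^sup>2" using mono_props(1)[OF h1 hbd less_imp_le[OF dh], of x 0] by simp
  have a: "dh * \<bar>x\<bar> \<le> \<bar>h x - h 0\<bar>"
  proof (cases "x = 0")
    case True then show ?thesis by simp
  next
    case False
    have "dh * \<bar>x\<bar> * \<bar>x\<bar> = dh * x\<^sup>2" by (simp add: power2_eq_square abs_mult_self_eq)
    also have "\<dots> \<le> x * (h x - h 0)" using m by simp
    also have "\<dots> \<le> \<bar>h x - h 0\<bar> * \<bar>x\<bar>" by (simp add: abs_mult[symmetric] mult.commute)
    finally show ?thesis using False by simp
  qed
  have "(dh * \<bar>x\<bar>)\<^sup>2 \<le> (h x - h 0)\<^sup>2"
    using a dh by (simp add: abs_le_square_iff[symmetric] abs_mult)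
  also have "\<dots> \<le> 2 * ((h x)\<^sup>2 + (h 0)\<^sup>2)"
    using sum_squares_ge_zero[of "h x + h 0" 0] by (simp add: power2_eq_square algebra_simps)
  finally have "dh\<^sup>2 * x\<^sup>2 \<le> 2 * ((h x)\<^sup>2 + (h 0)\<^sup>2)" by (simp add: power_mult_distrib)
  then show ?thesis using dh by (simp add: field_simps)
qed

theorem lemma4p1:
  fixes h h' h'' b b' b'' v0 :: "real \<Rightarrow> real"
    and p :: "real \<times> real \<Rightarrow> real"
    and T \<delta>h Ch \<delta>b Cb :: real
  assumes T: "T > 0"
    and h1: "\<And>x. (h has_real_derivative h' x) (at x)"
    and h2: "\<And>x. (h' has_real_derivative h'' x) (at x)"
    and h2c: "continuous_on UNIV h''"
    and hpos: "\<delta>h > 0" "Ch > 0"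
    and hbd: "\<And>x. \<delta>h \<le> h' x \<and> h' x \<le> Ch" "\<And>x. \<bar>h'' x\<bar> \<le> Ch"
    and b1: "\<And>x. (b has_real_derivative b' x) (at x)"
    and b2: "\<And>x. (b' has_real_derivative b'' x) (at x)"
    and b2c: "continuous_on UNIV b''"
    and bpos: "\<delta>b > 0" "Cb > 0"
    and bbd: "\<And>x. \<delta>b \<le> b x \<and> b x \<le> Cb" "\<And>x. \<bar>b' x\<bar> \<le> Cb" "\<And>x. \<bar>b'' x\<bar> \<le> Cb"
    and pmeas: "p \<in> borel_measurable lborel"
    and pL2: "set_integrable lborel (QT T) (\<lambda>z. (p z)\<^sup>2)"
    and v0meas: "v0 \<in> borel_measurable lborel"
    and v0L2: "set_integrable lborel {0..1} (\<lambda>x. (v0 x)\<^sup>2)"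
  shows "\<exists>C>0. \<forall>n::nat. \<forall>\<delta>>0. \<forall>v v'. n \<ge> 2 \<and> scheme_sol h' b p v0 T \<delta> n v v' \<longrightarrow>
     (let V = step_fun n v; Z = (\<lambda>t x. h (V t x)) in
       (\<forall>t\<in>{0..T}.
          set_lebesgue_integral lborel {0..1} (\<lambda>x. (V t x)\<^sup>2) \<le> C \<and>
          set_lebesgue_integral lborel {0..1} (\<lambda>x. (Z t x)\<^sup>2) \<le> C) \<and>
       set_lebesgue_integral lborel {0..T}
          (\<lambda>t. set_lebesgue_integral lborel {0..1} (\<lambda>x. (diffq n V t x)\<^sup>2)) \<le> C \<and>
       set_lebesgue_integral lborel {0..T}
          (\<lambda>t. set_lebesgue_integral lborel {0..1} (\<lambda>x. (diffq n Z t x)\<^sup>2)) \<le> C)"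
proof -
  define P where "P = set_lebesgue_integral lborel (QT T) (\<lambda>z. (p z)\<^sup>2)"
  define I0 where "I0 = set_lebesgue_integral lborel {0..1} (\<lambda>x. (v0 x)\<^sup>2)"
  define K where "K = (Cb * Ch)\<^sup>2 / (2 * \<delta>h)"
  define M where "M = (h 0)\<^sup>2 + Ch\<^sup>2 * I0 + K * P"
  have P0: "P \<ge> 0" unfolding P_def set_lebesgue_integral_def by (simp add: indicator_def)
  have I00: "I0 \<ge> 0" unfolding I0_def set_lebesgue_integral_def by (simp add: indicator_def)
  have K0: "K \<ge> 0" unfolding K_def using hpos by simp
  have M0: "M \<ge> 0" unfolding M_def using P0 I00 K0 by simp
  define C where "C = 1 + 2 * M + 2 / \<delta>h\<^sup>2 * (2 * M + (h 0)\<^sup>2) + 2 * M / \<delta>h + Ch\<^sup>2 * (2 * M / \<delta>h)"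
  have t1: "2 * M \<ge> 0" "2 / \<delta>h\<^sup>2 * (2 * M + (h 0)\<^sup>2) \<ge> 0" "2 * M / \<delta>h \<ge> 0" "Ch\<^sup>2 * (2 * M / \<delta>h) \<ge> 0"
    using M0 hpos by auto
  have Cpos: "C > 0" unfolding C_def using t1 by linarith
  show ?thesis
  proof (intro exI[of _ C] conjI allI impI Cpos)
    fix n :: nat and \<delta> :: real and v v' :: "nat \<Rightarrow> real \<Rightarrow> real"
    assume d: "\<delta> > 0" and nsol: "n \<ge> 2 \<and> scheme_sol h' b p v0 T \<delta> n v v'"
    then have n: "n \<ge> 2" and sol: "scheme_sol h' b p v0 T \<delta> n v v'" by auto
    have n1: "n \<ge> 1" using n by simp
    have dp: "dx n > 0" using n unfolding dx_def by simp
    have ndx: "real n * dx n = 1" unfolding dx_def using n by simp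
    define Qd where "Qd = (\<lambda>t. (\<Sum>i\<in>{1..<n}. ((v (Suc i) t - v i t) / dx n)\<^sup>2) * dx n)"
    define Zd where "Zd = (\<lambda>t. (\<Sum>i\<in>{1..<n}. ((h (v (Suc i) t) - h (v i t)) / dx n)\<^sup>2) * dx n)"
    note cr = core[OF T h1 h2 hpos hbd(1) bpos bbd(1) pmeas pL2 v0meas v0L2 n d sol,
        folded P_def I0_def K_def Qd_def Zd_def, folded M_def]
    have c1: "\<And>t. t \<in> {0..T} \<Longrightarrow> (\<Sum>i\<in>{1..n}. (h (v i t))\<^sup>2) * dx n \<le> 2 * M" using cr(1) by blast
    have c2: "integral {0..T} Qd \<le> 2 * M / \<delta>h" using cr(2) .
    have Qdc: "continuous_on {0..T} Qd" using cr(3) .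
    have Zdc: "continuous_on {0..T} Zd" using cr(4) .
    have c5: "\<And>t. Zd t \<le> Ch\<^sup>2 * Qd t" using cr(5) unfolding Qd_def Zd_def by blast
    have eqV: "set_lebesgue_integral lborel {0..1} (\<lambda>x. (step_fun n v t x)\<^sup>2) = (\<Sum>i\<in>{1..n}. (v i t)\<^sup>2) * dx n" for t
      using int_V2[OF n1, of "\<lambda>x. x" v t] by simp
    have eqZ: "set_lebesgue_integral lborel {0..1} (\<lambda>x. (h (step_fun n v t x))\<^sup>2) = (\<Sum>i\<in>{1..n}. (h (v i t))\<^sup>2) * dx n" for t
      using int_V2[OF n1, of h v t] by simp
    have eqdV: "(\<lambda>t. set_lebesgue_integral lborel {0..1} (\<lambda>x. (diffq n (step_fun n v) t x)\<^sup>2)) = Qd"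
      unfolding Qd_def using int_dV2[OF n1, of "\<lambda>x. x" v] by simp
    have eqdZ: "(\<lambda>t. set_lebesgue_integral lborel {0..1} (\<lambda>x. (diffq n (\<lambda>t x. h (step_fun n v t x)) t x)\<^sup>2)) = Zd"
      unfolding Zd_def using int_dV2[OF n1, of h v] by simp
    have iQ: "set_lebesgue_integral lborel {0..T} Qd = integral {0..T} Qd"
      using set_borel_integral_eq_integral(2)[OF borel_integrable_atLeastAtMost'[OF Qdc]] .
    have iZ: "set_lebesgue_integral lborel {0..T} Zd = integral {0..T} Zd"
      using set_borel_integral_eq_integral(2)[OF borel_integrable_atLeastAtMost'[OF Zdc]] .
    have bV: "(\<Sum>i\<in>{1..n}. (v i t)\<^sup>2) * dx n \<le> C" if t: "t \<in> {0..T}" for t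
    proof -
      have "(\<Sum>i\<in>{1..n}. (v i t)\<^sup>2) * dx n \<le> (\<Sum>i\<in>{1..n}. 2 / \<delta>h\<^sup>2 * ((h (v i t))\<^sup>2 + (h 0)\<^sup>2)) * dx n"
        using dp by (intro mult_right_mono sum_mono v_sq_bound[OF h1 hbd(1) hpos(1)]) auto
      also have "\<dots> = 2 / \<delta>h\<^sup>2 * ((\<Sum>i\<in>{1..n}. (h (v i t))\<^sup>2) * dx n + (h 0)\<^sup>2 * (real n * dx n))"
        by (simp add: sum.distrib sum_distrib_left sum_distrib_right algebra_simps)
      also have "\<dots> \<le> 2 / \<delta>h\<^sup>2 * (2 * M + (h 0)\<^sup>2)"
        using c1[OF t] ndx hpos by (intro mult_left_mono) auto
      finally show ?thesis unfolding C_def using t1 by linarith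
    qed
    have bZ: "(\<Sum>i\<in>{1..n}. (h (v i t))\<^sup>2) * dx n \<le> C" if t: "t \<in> {0..T}" for t
      using c1[OF t] t1 unfolding C_def by linarith
    have bdV: "integral {0..T} Qd \<le> C" using c2 t1 unfolding C_def by linarith
    have bdZ: "integral {0..T} Zd \<le> C"
    proof -
      have "integral {0..T} Zd \<le> integral {0..T} (\<lambda>t. Ch\<^sup>2 * Qd t)"
        using Zdc Qdc c5 by (intro integral_le integrable_continuous_real continuous_intros) auto
      also have "\<dots> = Ch\<^sup>2 * integral {0..T} Qd" by simp
      also have "\<dots> \<le> Ch\<^sup>2 * (2 * M / \<delta>h)" using c2 by (intro mult_left_mono) auto
      finally show ?thesis using t1 unfolding C_def by linarith
    qed
    show "let V = step_fun n v; Z = (\<lambda>t x. h (V t x)) in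
       (\<forall>t\<in>{0..T}.
          set_lebesgue_integral lborel {0..1} (\<lambda>x. (V t x)\<^sup>2) \<le> C \<and>
          set_lebesgue_integral lborel {0..1} (\<lambda>x. (Z t x)\<^sup>2) \<le> C) \<and>
       set_lebesgue_integral lborel {0..T}
          (\<lambda>t. set_lebesgue_integral lborel {0..1} (\<lambda>x. (diffq n V t x)\<^sup>2)) \<le> C \<and>
       set_lebesgue_integral lborel {0..T}
          (\<lambda>t. set_lebesgue_integral lborel {0..1} (\<lambda>x. (diffq n Z t x)\<^sup>2)) \<le> C"
      unfolding Let_def eqdV eqdZ iQ iZ eqV eqZ using bV bZ bdV bdZ by auto
  qed
qed


end
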